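(* Assume the payoffs are normalized with $T=1$, $S=0$. Assume X uses a memory-one strategy $\mathbf p$ whose X Press-Dyson vector is $\mathbf p-(1,1,0,0)=\gamma(\bar\alpha\mathbf S_X+\bar\beta\mathbf S_Y+\mathbf 1)$ with $\gamma>0$. Let $-Z^{-1}=\bar\alpha+\bar\beta$, so that $P\le Z\le R$. Then for any strategy pattern played by Y and any associated limit distribution, $$\bar\alpha Z(s_X-s_Y)=s_Y-Z.$$ Furthermore, with $\kappa=\bar\alpha Z/(1+\bar\alpha Z)$ one has $\kappa<1$, $\kappa$ has the same sign as $\bar\alpha$, and for any strategy pattern played by Y and any associated limit distribution, $$\kappa(s_X-Z)=s_Y-Z.$$
   Context: Iterated Prisoner's Dilemma with normalized payoffs $T=1>R>P>S=0$ and $2R>1$; outcomes ordered $cc,cd,dc,dd$ (first letter X's play, second Y's; $c$ = cooperate, $d$ = defect); payoff vectors $\mathbf S_X=(R,0,1,P)$, $\mathbf S_Y=(R,1,0,P)$, $\mathbf 1=(1,1,1,1)$. A memory-one strategy for X is $\mathbf p\in[0,1]^4$, $p_i$ the probability X plays $c$ after outcome $i$ of the previous round. A strategy pattern for Y is any (possibly randomized, history-dependent) rule for Y's play. With $\mathbf v^n$ the distribution of the outcome of round $n$, a limit distribution is any limit point $\mathbf v$ of the Cesàro averages $\frac1n\sum_{k\le n}\mathbf v^k$, with expected payoffs $s_X=\langle\mathbf v\cdot\mathbf S_X\rangle$, $s_Y=\langle\mathbf v\cdot\mathbf S_Y\rangle$. *)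

theory Defs
  imports Complex_Main
begin

text \<open>Outcomes of one round: (X cooperates?, Y cooperates?).
  cc = (True,True), cd = (True,False), dc = (False,True), dd = (False,False).
  Vectors indexed by outcomes are functions outcome => real.\<close>
type_synonym outcome = "bool \<times> bool"

definition SX :: "real \<Rightarrow> real \<Rightarrow> outcome \<Rightarrow> real" where
  "SX R P w = (case w of (True, True) \<Rightarrow> R | (True, False) \<Rightarrow> 0
                         | (False, True) \<Rightarrow> 1 | (False, False) \<Rightarrow> P)"

definition SY :: "real \<Rightarrow> real \<Rightarrow> outcome \<Rightarrow> real" where
  "SY R P w = (case w of (True, True) \<Rightarrow> R | (True, False) \<Rightarrow> 1
                         | (False, True) \<Rightarrow> 0 | (False, False) \<Rightarrow> P)"

definition e12 :: "outcome \<Rightarrow> real" where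
  "e12 w = (if fst w then 1 else 0)"

definition memory_one :: "(outcome \<Rightarrow> real) \<Rightarrow> bool" where
  "memory_one p \<longleftrightarrow> (\<forall>w. 0 \<le> p w \<and> p w \<le> 1)"

text \<open>A strategy pattern for Y: probability that Y cooperates given the full history
  of previous outcomes (a behavioural, history-dependent, randomized rule).\<close>
definition strategy_pattern :: "(outcome list \<Rightarrow> real) \<Rightarrow> bool" where
  "strategy_pattern q \<longleftrightarrow> (\<forall>h. 0 \<le> q h \<and> q h \<le> 1)"

definition x_coop :: "(outcome \<Rightarrow> real) \<Rightarrow> real \<Rightarrow> outcome list \<Rightarrow> real" where
  "x_coop p p0 h = (if h = [] then p0 else p (last h))"

definition step_prob :: "(outcome \<Rightarrow> real) \<Rightarrow> real \<Rightarrow> (outcome list \<Rightarrow> real)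
    \<Rightarrow> outcome list \<Rightarrow> outcome \<Rightarrow> real" where
  "step_prob p p0 q h w =
     (if fst w then x_coop p p0 h else 1 - x_coop p p0 h) *
     (if snd w then q h else 1 - q h)"

definition hist_prob :: "(outcome \<Rightarrow> real) \<Rightarrow> real \<Rightarrow> (outcome list \<Rightarrow> real)
    \<Rightarrow> outcome list \<Rightarrow> real" where
  "hist_prob p p0 q h = (\<Prod>i<length h. step_prob p p0 q (take i h) (h ! i))"

text \<open>v^(n+1): distribution of the outcome of round n+1 (rounds counted from 0 here).\<close>
definition round_dist :: "(outcome \<Rightarrow> real) \<Rightarrow> real \<Rightarrow> (outcome list \<Rightarrow> real)
    \<Rightarrow> nat \<Rightarrow> outcome \<Rightarrow> real" where
  "round_dist p p0 q n w =
     (\<Sum>h\<in>{h. length h = Suc n}. if last h = w then hist_prob p p0 q h else 0)"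

definition cesaro :: "(outcome \<Rightarrow> real) \<Rightarrow> real \<Rightarrow> (outcome list \<Rightarrow> real)
    \<Rightarrow> nat \<Rightarrow> outcome \<Rightarrow> real" where
  "cesaro p p0 q n w = (\<Sum>k<n. round_dist p p0 q k w) / real n"

definition limit_dist :: "(outcome \<Rightarrow> real) \<Rightarrow> real \<Rightarrow> (outcome list \<Rightarrow> real)
    \<Rightarrow> (outcome \<Rightarrow> real) \<Rightarrow> bool" where
  "limit_dist p p0 q v \<longleftrightarrow>
     (\<exists>r::nat \<Rightarrow> nat. strict_mono r \<and> (\<forall>w. (\<lambda>n. cesaro p p0 q (r n) w) \<longlonglongrightarrow> v w))"

definition payoff :: "(outcome \<Rightarrow> real) \<Rightarrow> (outcome \<Rightarrow> real) \<Rightarrow> real" where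
  "payoff v S = (\<Sum>w\<in>UNIV. v w * S w)"

end

theory Submission
  imports Defs
begin

lemma sum_outcome: "(\<Sum>w\<in>(UNIV::outcome set). f w) = f (True,True) + f (True,False) + f (False,True) + f (False,False)"
proof -
  have U: "(UNIV::outcome set) = {(True,True),(True,False),(False,True),(False,False)}"
    by (auto simp: UNIV_bool)
  show ?thesis by (subst U) (simp add: add.assoc)
qed

lemma fin_len: "finite {h::'a::finite list. length h = n}"
  using finite_lists_length_eq[of "UNIV::'a set" n] by simp

lemma sum_lists_Suc:
  "(\<Sum>h\<in>{h::'a::finite list. length h = Suc n}. f h) = (\<Sum>h\<in>{h. length h = n}. \<Sum>w\<in>UNIV. f (h@[w]))"
proof -
  have eq: "{h::'a list. length h = Suc n} = (\<lambda>(h,w). h@[w]) ` ({h. length h = n} \<times> UNIV)"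
  proof (rule set_eqI, rule iffI)
    fix x :: "'a list" assume "x \<in> {h. length h = Suc n}"
    then have "x \<noteq> []" "length (butlast x) = n" by auto
    then have "x = (\<lambda>(h,w). h@[w]) (butlast x, last x)" by simp
    then show "x \<in> (\<lambda>(h,w). h@[w]) ` ({h. length h = n} \<times> UNIV)"
      using \<open>length (butlast x) = n\<close> by blast
  qed auto
  have inj: "inj_on (\<lambda>(h,w). h@[w]) ({h::'a list. length h = n} \<times> UNIV)"
    by (auto simp: inj_on_def)
  have fin: "finite {h::'a list. length h = n}" by (rule fin_len)
  show ?thesis
    unfolding eq sum.reindex[OF inj] by (simp add: sum.cartesian_product fin case_prod_unfold)
qed

lemma hist_prob_snoc: "hist_prob p p0 q (h@[w]) = hist_prob p p0 q h * step_prob p p0 q h w"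
proof -
  have "hist_prob p p0 q (h@[w]) = (\<Prod>i<Suc (length h). step_prob p p0 q (take i (h@[w])) ((h@[w]) ! i))"
    unfolding hist_prob_def by simp
  also have "\<dots> = (\<Prod>i<length h. step_prob p p0 q (take i (h@[w])) ((h@[w]) ! i)) * step_prob p p0 q h w"
    by simp
  also have "(\<Prod>i<length h. step_prob p p0 q (take i (h@[w])) ((h@[w]) ! i)) = hist_prob p p0 q h"
    unfolding hist_prob_def by (rule prod.cong) (auto simp: nth_append)
  finally show ?thesis .
qed

lemma step_sum: "(\<Sum>w\<in>UNIV. step_prob p p0 q h w) = 1"
  by (simp add: sum_outcome step_prob_def algebra_simps)

lemma step_sum_e12: "(\<Sum>w\<in>UNIV. step_prob p p0 q h w * e12 w) = x_coop p p0 h"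
  by (simp add: sum_outcome step_prob_def e12_def algebra_simps)

lemma hist_total: "(\<Sum>h\<in>{h. length h = n}. hist_prob p p0 q h) = 1"
proof (induction n)
  case 0
  then show ?case by (simp add: hist_prob_def)
next
  case (Suc n)
  have "(\<Sum>h\<in>{h. length h = Suc n}. hist_prob p p0 q h)
      = (\<Sum>h\<in>{h. length h = n}. hist_prob p p0 q h * (\<Sum>w\<in>UNIV. step_prob p p0 q h w))"
    by (simp add: sum_lists_Suc hist_prob_snoc sum_distrib_left)
  also have "\<dots> = 1" using Suc by (simp add: step_sum)
  finally show ?case .
qed

lemma rd_sum: "(\<Sum>w\<in>UNIV. round_dist p p0 q n w * g w)
   = (\<Sum>h\<in>{h. length h = Suc n}. hist_prob p p0 q h * g (last h))"
proof -
  have fin: "finite {h::outcome list. length h = Suc n}" by (rule fin_len)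
  have "(\<Sum>w\<in>UNIV. round_dist p p0 q n w * g w)
     = (\<Sum>w\<in>UNIV. \<Sum>h\<in>{h. length h = Suc n}. if last h = w then hist_prob p p0 q h * g w else 0)"
    unfolding round_dist_def sum_distrib_right by (intro sum.cong) auto
  also have "\<dots> = (\<Sum>h\<in>{h. length h = Suc n}. \<Sum>w\<in>UNIV. if last h = w then hist_prob p p0 q h * g w else 0)"
    by (rule sum.swap)
  also have "\<dots> = (\<Sum>h\<in>{h. length h = Suc n}. hist_prob p p0 q h * g (last h))"
    by (simp add: sum.delta)
  finally show ?thesis .
qed

definition cX where "cX p p0 q n = (\<Sum>w\<in>UNIV. round_dist p p0 q n w * e12 w)"

lemma cX_Suc: "cX p p0 q (Suc n) = (\<Sum>w\<in>UNIV. round_dist p p0 q n w * p w)"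
proof -
  have "cX p p0 q (Suc n) = (\<Sum>h\<in>{h. length h = Suc (Suc n)}. hist_prob p p0 q h * e12 (last h))"
    unfolding cX_def by (rule rd_sum)
  also have "\<dots> = (\<Sum>h\<in>{h. length h = Suc n}. hist_prob p p0 q h * (\<Sum>w\<in>UNIV. step_prob p p0 q h w * e12 w))"
    by (simp add: sum_lists_Suc hist_prob_snoc sum_distrib_left mult.assoc)
  also have "\<dots> = (\<Sum>h\<in>{h. length h = Suc n}. hist_prob p p0 q h * p (last h))"
    by (intro sum.cong) (auto simp: step_sum_e12 x_coop_def)
  also have "\<dots> = (\<Sum>w\<in>UNIV. round_dist p p0 q n w * p w)" by (rule rd_sum[symmetric])
  finally show ?thesis .
qed

lemma hist_nonneg:
  assumes "memory_one p" "0 \<le> p0" "p0 \<le> 1" "strategy_pattern q"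
  shows "0 \<le> hist_prob p p0 q h"
proof -
  have pb: "\<forall>w. 0 \<le> p w \<and> p w \<le> 1" using assms(1) unfolding memory_one_def by blast
  have "0 \<le> x_coop p p0 h'" "x_coop p p0 h' \<le> 1" for h'
    using assms pb[rule_format, of "last h'"] unfolding x_coop_def by auto
  moreover have "0 \<le> q h'" "q h' \<le> 1" for h'
    using assms unfolding strategy_pattern_def by auto
  ultimately have "0 \<le> step_prob p p0 q h' w" for h' w
    unfolding step_prob_def by (intro mult_nonneg_nonneg) auto
  then show ?thesis unfolding hist_prob_def by (intro prod_nonneg) auto
qed

lemma cX_bounds:
  assumes "memory_one p" "0 \<le> p0" "p0 \<le> 1" "strategy_pattern q"
  shows "0 \<le> cX p p0 q n \<and> cX p p0 q n \<le> 1"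
proof -
  have eq: "cX p p0 q n = (\<Sum>h\<in>{h. length h = Suc n}. hist_prob p p0 q h * e12 (last h))"
    unfolding cX_def by (rule rd_sum)
  have "0 \<le> (\<Sum>h\<in>{h. length h = Suc n}. hist_prob p p0 q h * e12 (last h))"
    using hist_nonneg[OF assms] by (intro sum_nonneg) (auto simp: e12_def)
  moreover have "(\<Sum>h\<in>{h. length h = Suc n}. hist_prob p p0 q h * e12 (last h))
      \<le> (\<Sum>h\<in>{h. length h = Suc n}. hist_prob p p0 q h)"
    using hist_nonneg[OF assms] by (intro sum_mono) (auto simp: e12_def)
  ultimately show ?thesis using eq hist_total by simp
qed

lemma cesaro_sum: "(\<Sum>w\<in>UNIV. cesaro p p0 q n w * f w)
   = (\<Sum>k<n. \<Sum>w\<in>UNIV. round_dist p p0 q k w * f w) / real n"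
  unfolding cesaro_def
  by (simp add: sum_divide_distrib[symmetric] sum_distrib_right sum.swap[of _ "{..<n}"] times_divide_eq_left)

lemma press_dyson:
  assumes a: "memory_one p" "0 \<le> p0" "p0 \<le> 1" "strategy_pattern q"
    and lim: "limit_dist p p0 q v"
  shows "(\<Sum>w\<in>UNIV. v w * (p w - e12 w)) = 0 \<and> (\<Sum>w\<in>UNIV. v w) = 1"
proof -
  obtain r where r: "strict_mono r" "\<And>w. (\<lambda>n. cesaro p p0 q (r n) w) \<longlonglongrightarrow> v w"
    using lim unfolding limit_dist_def by blast
  have L: "(\<lambda>n. \<Sum>w\<in>UNIV. cesaro p p0 q (r n) w * f w) \<longlonglongrightarrow> (\<Sum>w\<in>UNIV. v w * f w)" for f
    by (intro tendsto_sum tendsto_mult_right r(2))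
  have D: "(\<Sum>w\<in>UNIV. round_dist p p0 q k w * (p w - e12 w)) = cX p p0 q (Suc k) - cX p p0 q k" for k
    unfolding cX_Suc by (simp add: cX_def right_diff_distrib sum_subtractf)
  have E: "(\<Sum>w\<in>UNIV. cesaro p p0 q n w * (p w - e12 w)) = (cX p p0 q n - cX p p0 q 0) / real n" for n
    unfolding cesaro_sum D sum_lessThan_telescope ..
  have Z: "(\<lambda>n. (cX p p0 q n - cX p p0 q 0) / real n) \<longlonglongrightarrow> 0"
  proof (rule tendsto_sandwich[of "\<lambda>n. -1 / real n" _ _ "\<lambda>n. 1 / real n"])
    show "\<forall>\<^sub>F n in sequentially. - 1 / real n \<le> (cX p p0 q n - cX p p0 q 0) / real n"
      using cX_bounds[OF a] by (intro always_eventually allI divide_right_mono) (auto, smt (verit) cX_bounds[OF a])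
    show "\<forall>\<^sub>F n in sequentially. (cX p p0 q n - cX p p0 q 0) / real n \<le> 1 / real n"
      by (intro always_eventually allI divide_right_mono) (auto, smt (verit) cX_bounds[OF a])
    show "(\<lambda>n. - 1 / real n) \<longlonglongrightarrow> 0" by (rule lim_const_over_n)
    show "(\<lambda>n. 1 / real n) \<longlonglongrightarrow> 0" by (rule lim_const_over_n)
  qed
  have "(\<lambda>n. \<Sum>w\<in>UNIV. cesaro p p0 q n w * (p w - e12 w)) \<longlonglongrightarrow> 0"
    unfolding E by (rule Z)
  from LIMSEQ_subseq_LIMSEQ[OF this r(1)]
  have "(\<lambda>n. \<Sum>w\<in>UNIV. cesaro p p0 q (r n) w * (p w - e12 w)) \<longlonglongrightarrow> 0"
    by (simp add: o_def)
  with L have 1: "(\<Sum>w\<in>UNIV. v w * (p w - e12 w)) = 0" by (rule LIMSEQ_unique)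
  have one: "(\<Sum>w\<in>UNIV. round_dist p p0 q k w * 1) = 1" for k
    by (simp only: rd_sum) (simp add: hist_total)
  have "(\<lambda>n. \<Sum>w\<in>UNIV. cesaro p p0 q (r n) w * 1) \<longlonglongrightarrow> 1"
  proof (rule Lim_transform_eventually[OF tendsto_const])
    show "\<forall>\<^sub>F n in sequentially. 1 = (\<Sum>w\<in>UNIV. cesaro p p0 q (r n) w * 1)"
      unfolding eventually_sequentially
    proof (intro exI[of _ 1] allI impI)
      fix n :: nat assume "1 \<le> n"
      then have "r n \<ge> 1" using seq_suble[OF r(1), of n] by simp
      then show "1 = (\<Sum>w\<in>UNIV. cesaro p p0 q (r n) w * 1)"
        unfolding cesaro_sum one by simp
    qed
  qed
  with L[of "\<lambda>_. 1"] have "(\<Sum>w\<in>UNIV. v w * 1) = 1" by (rule LIMSEQ_unique)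
  with 1 show ?thesis by simp
qed

theorem proposition3p2:
  fixes R P :: real and p :: "outcome \<Rightarrow> real"
    and \<gamma> \<alpha> \<beta> Z :: real
  assumes payoffs: "0 < P" "P < R" "R < 1" "2 * R > 1"
    and mem1: "memory_one p"
    and gamma_pos: "\<gamma> > 0"
    and PD: "\<forall>w. p w - e12 w = \<gamma> * (\<alpha> * SX R P w + \<beta> * SY R P w + 1)"
    and Z_def: "- (1 / Z) = \<alpha> + \<beta>"
  shows "(P \<le> Z \<and> Z \<le> R) \<and>
         (\<forall>p0 q v. 0 \<le> p0 \<and> p0 \<le> 1 \<and> strategy_pattern q \<and> limit_dist p p0 q v \<longrightarrow>
           \<alpha> * Z * (payoff v (SX R P) - payoff v (SY R P)) = payoff v (SY R P) - Z) \<and>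
         \<alpha> * Z / (1 + \<alpha> * Z) < 1 \<and>
         sgn (\<alpha> * Z / (1 + \<alpha> * Z)) = sgn \<alpha> \<and>
         (\<forall>p0 q v. 0 \<le> p0 \<and> p0 \<le> 1 \<and> strategy_pattern q \<and> limit_dist p p0 q v \<longrightarrow>
           (\<alpha> * Z / (1 + \<alpha> * Z)) * (payoff v (SX R P) - Z) = payoff v (SY R P) - Z)"
proof -
  have pb: "\<forall>w. 0 \<le> p w \<and> p w \<le> 1" using mem1 unfolding memory_one_def by blast
  define s where "s = \<alpha> + \<beta>"
  have cc: "p (True,True) - 1 = \<gamma> * (s * R + 1)"
    using PD[rule_format, of "(True,True)"] by (simp add: SX_def SY_def e12_def s_def algebra_simps)
  have dc: "p (False,True) = \<gamma> * (\<alpha> + 1)"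
    using PD[rule_format, of "(False,True)"] by (simp add: SX_def SY_def e12_def)
  have dd: "p (False,False) = \<gamma> * (s * P + 1)"
    using PD[rule_format, of "(False,False)"] by (simp add: SX_def SY_def e12_def s_def algebra_simps)
  have h1: "s * R + 1 \<le> 0"
  proof -
    have "\<gamma> * (s * R + 1) \<le> 0" using cc pb[rule_format, of "(True,True)"] by linarith
    then show ?thesis using gamma_pos by (simp add: mult_le_0_iff)
  qed
  have h2: "\<alpha> + 1 \<ge> 0"
  proof -
    have "\<gamma> * (\<alpha> + 1) \<ge> 0" using dc pb[rule_format, of "(False,True)"] by linarith
    then show ?thesis using gamma_pos by (simp add: zero_le_mult_iff)
  qed
  have h3: "s * P + 1 \<ge> 0"
  proof -
    have "\<gamma> * (s * P + 1) \<ge> 0" using dd pb[rule_format, of "(False,False)"] by linarith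
    then show ?thesis using gamma_pos by (simp add: zero_le_mult_iff)
  qed
  have sneg: "s < 0"
  proof (rule ccontr)
    assume "\<not> s < 0"
    then have "s * R \<ge> 0" using payoffs by simp
    then show False using h1 by linarith
  qed
  have Zne: "Z \<noteq> 0" using Z_def sneg s_def by auto
  have sZ: "s * Z = -1" using Z_def Zne s_def by (simp add: field_simps)
  have Zpos: "Z > 0" using sZ sneg by (smt (verit) mult_nonpos_nonpos)
  have PZ: "P \<le> Z"
  proof -
    have "s * P \<ge> s * Z" using h3 sZ by linarith
    then show ?thesis using sneg by (simp add: mult_le_cancel_left)
  qed
  have ZR: "Z \<le> R"
  proof -
    have "s * R \<le> s * Z" using h1 sZ by linarith
    then show ?thesis using sneg by (simp add: mult_le_cancel_left)
  qed
  have d: "1 + \<alpha> * Z > 0"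
  proof -
    have "\<alpha> * Z \<ge> -1 * Z" using h2 Zpos by (intro mult_right_mono) auto
    then show ?thesis using ZR payoffs by linarith
  qed
  have main: "\<alpha> * Z * (payoff v (SX R P) - payoff v (SY R P)) = payoff v (SY R P) - Z"
    if a: "0 \<le> p0" "p0 \<le> 1" "strategy_pattern q" "limit_dist p p0 q v" for p0 q v
  proof -
    from press_dyson[OF mem1 a]
    have e1: "(\<Sum>w\<in>UNIV. v w * (p w - e12 w)) = 0" and e2: "(\<Sum>w\<in>UNIV. v w) = 1" by auto
    have "(\<Sum>w\<in>UNIV. v w * (p w - e12 w)) = \<gamma> * (\<alpha> * payoff v (SX R P) + \<beta> * payoff v (SY R P) + (\<Sum>w\<in>UNIV. v w))"
      using PD by (simp add: payoff_def sum_outcome SX_def SY_def algebra_simps)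
    with e1 e2 gamma_pos have A: "\<alpha> * payoff v (SX R P) + \<beta> * payoff v (SY R P) + 1 = 0" by simp
    define x where "x = payoff v (SX R P)"
    define y where "y = payoff v (SY R P)"
    have A': "\<alpha> * x + \<beta> * y + 1 = 0" using A x_def y_def by simp
    have bZ: "\<beta> * Z = -1 - \<alpha> * Z" using sZ s_def by (simp add: algebra_simps)
    have "Z * (\<alpha> * x + \<beta> * y + 1) = 0" using A' by simp
    then have "\<alpha> * Z * x + (\<beta> * Z) * y + Z = 0" by (simp add: algebra_simps)
    then have "\<alpha> * Z * x + (-1 - \<alpha> * Z) * y + Z = 0" using bZ by simp
    then show ?thesis unfolding x_def[symmetric] y_def[symmetric] by (simp add: algebra_simps)
  qed
  show ?thesis
  proof (intro conjI allI impI)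
    show "P \<le> Z" "Z \<le> R" by (fact PZ, fact ZR)
    show "\<alpha> * Z * (payoff v (SX R P) - payoff v (SY R P)) = payoff v (SY R P) - Z"
      if "0 \<le> p0 \<and> p0 \<le> 1 \<and> strategy_pattern q \<and> limit_dist p p0 q v" for p0 q v
      using main that by blast
    show "\<alpha> * Z / (1 + \<alpha> * Z) < 1" using d by (simp add: divide_less_eq)
    show "sgn (\<alpha> * Z / (1 + \<alpha> * Z)) = sgn \<alpha>"
      using d Zpos by (simp add: sgn_mult)
    show "\<alpha> * Z / (1 + \<alpha> * Z) * (payoff v (SX R P) - Z) = payoff v (SY R P) - Z"
      if "0 \<le> p0 \<and> p0 \<le> 1 \<and> strategy_pattern q \<and> limit_dist p p0 q v" for p0 q v
    proof -
      have m: "\<alpha> * Z * (payoff v (SX R P) - payoff v (SY R P)) = payoff v (SY R P) - Z"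
        using main that by blast
      show ?thesis using d m by (simp add: field_simps)
    qed
  qed
qed

end
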